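(* Assume the law of excluded middle. Let $\alpha\in\mathrm{ord}$ with $\alpha\neq_{\mathrm{Ord}}\underline 0$. Then either there exists $\beta\in\mathrm{ord}$ with $\alpha=_{\mathrm{Ord}}\mathrm{succ}(\beta)$, or $\alpha$ is the supremum (least upper bound for $\le$) of the ordinals $\gamma\in\mathrm{ord}$ with $\gamma<\alpha$.
   Context: Let $\mathfrak F$ be a set of index sets such that: $\mathbb N$ and each $\mathbb N_k=\{n\in\mathbb N:n<k\}$ ($k\ge 0$) belong to $\mathfrak F$; every finitely enumerated subset of an element of $\mathfrak F$ is isomorphic to an element of $\mathfrak F$; for $J\in\mathfrak F$ the set of finitely enumerated subsets of $J$ is isomorphic to an element of $\mathfrak F$; $\mathfrak F$ is stable under disjoint unions indexed by elements of $\mathfrak F$. A finitely enumerated subset of $A$ is one given by a map $\mathbb N_k\to A$; write $F\subseteq_f I$. The set $\mathrm{ord}$ is inductively generated by $\underline 0$ and, for every family $(\alpha_i)_{i\in I}$ with $I\in\mathfrak F$, $\alpha_i\in\mathrm{ord}$, an element $\mathrm S(\alpha_i)_{i\in I}$; for such $\alpha$, $I_\alpha=I$ and $\alpha_i$ are its definitional subordinals; $I_{\underline 0}=\emptyset$. $\mathrm{succ}(\beta)$ is $\mathrm S$ of the one-element family $(\beta)$. For a finite list $F$ in $I_\alpha$, $\alpha_F$ is the list of the $\alpha_i$, $i\in F$. Relations between an element and a nonempty finite list, by simultaneous induction: $\alpha\le\beta^1,\dots,\beta^m$ means $\alpha_i<\beta^1,\dots,\beta^m$ for all $i\in I_\alpha$;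 $\alpha<\beta^1,\dots,\beta^m$ means there exist $F_1\subseteq_f I_{\beta^1},\dots,F_m\subseteq_f I_{\beta^m}$, not all empty, with $\alpha\le\beta^1_{F_1},\dots,\beta^m_{F_m}$ (concatenated list). $\alpha=_{\mathrm{Ord}}\beta$ means $\alpha\le\beta$ and $\beta\le\alpha$. *)

theory Defs
  imports Main "HOL-Library.Equipollence"
begin

text \<open>Tree ordinals over index sets drawn from a family FF of subsets of a
 universe type 'i.  S I f is the ordinal S (f i) for i in I; values of f
 outside I are irrelevant (never inspected by the relations below).\<close>

datatype 'i ordt = Zero | S "'i set" "'i \<Rightarrow> 'i ordt"

fun idx :: "'i ordt \<Rightarrow> 'i set" where
  "idx Zero = {}"
| "idx (S I f) = I"

fun sub :: "'i ordt \<Rightarrow> 'i \<Rightarrow> 'i ordt" where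
  "sub Zero i = Zero"
| "sub (S I f) i = f i"

text \<open>Closure conditions on the family of index sets (up to isomorphism =
 equipollence, since index sets live in a fixed universe type).\<close>

definition index_family :: "'i set set \<Rightarrow> bool" where
  "index_family FF \<longleftrightarrow>
     (\<exists>I\<in>FF. I \<approx> (UNIV :: nat set))
   \<and> (\<forall>k::nat. \<exists>I\<in>FF. I \<approx> {..<k})
   \<and> (\<forall>J\<in>FF. \<forall>k::nat. \<forall>e. e ` {..<k} \<subseteq> J \<longrightarrow> (\<exists>I\<in>FF. I \<approx> e ` {..<k}))
   \<and> (\<forall>J\<in>FF. \<exists>I\<in>FF. I \<approx> {xs :: 'i list. set xs \<subseteq> J})
   \<and> (\<forall>I\<in>FF. \<forall>A. (\<forall>i\<in>I. A i \<in> FF) \<longrightarrow> (\<exists>K\<in>FF. K \<approx> Sigma I A))"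

inductive in_ord :: "'i set set \<Rightarrow> 'i ordt \<Rightarrow> bool" for FF where
  zero: "in_ord FF Zero"
| succ: "I \<in> FF \<Longrightarrow> (\<forall>i\<in>I. in_ord FF (f i)) \<Longrightarrow> in_ord FF (S I f)"

text \<open>alpha \<le> beta^1..beta^m and alpha < beta^1..beta^m (nonempty list on the
 right), by simultaneous induction.  Fs!j is the finitely enumerated subset F_j
 of I_{beta^j}, given as a list.\<close>

inductive ord_le :: "'i ordt \<Rightarrow> 'i ordt list \<Rightarrow> bool"
      and ord_lt :: "'i ordt \<Rightarrow> 'i ordt list \<Rightarrow> bool" where
  le: "bs \<noteq> [] \<Longrightarrow> (\<forall>i\<in>idx a. ord_lt (sub a i) bs) \<Longrightarrow> ord_le a bs"
| lt: "bs \<noteq> [] \<Longrightarrow> length Fs = length bs \<Longrightarrow>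
       (\<forall>j<length bs. set (Fs ! j) \<subseteq> idx (bs ! j)) \<Longrightarrow>
       (\<exists>j<length bs. Fs ! j \<noteq> []) \<Longrightarrow>
       ord_le a (concat (map2 (\<lambda>F b. map (sub b) F) Fs bs)) \<Longrightarrow> ord_lt a bs"

definition ord_eq :: "'i ordt \<Rightarrow> 'i ordt \<Rightarrow> bool" where
  "ord_eq a b \<longleftrightarrow> ord_le a [b] \<and> ord_le b [a]"

definition succ_ord :: "'i set set \<Rightarrow> 'i ordt \<Rightarrow> 'i ordt" where
  "succ_ord FF b = S (SOME I. I \<in> FF \<and> I \<approx> {..<Suc 0}) (\<lambda>_. b)"

end

theory Submission
  imports Defs
begin

inductive le2 :: "'i ordt \<Rightarrow> 'i ordt \<Rightarrow> bool"
      and lt2 :: "'i ordt \<Rightarrow> 'i ordt \<Rightarrow> bool" where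
  "(\<forall>i\<in>idx a. lt2 (sub a i) b) \<Longrightarrow> le2 a b"
| "i \<in> idx b \<Longrightarrow> le2 a (sub b i) \<Longrightarrow> lt2 a b"

lemma le2_iff: "le2 a b \<longleftrightarrow> (\<forall>i\<in>idx a. lt2 (sub a i) b)"
  by (auto intro: le2_lt2.intros elim: le2.cases)

lemma lt2_iff: "lt2 a b \<longleftrightarrow> (\<exists>i\<in>idx b. le2 a (sub b i))"
  by (auto intro: le2_lt2.intros elim: lt2.cases)

lemma sub_induct:
  assumes "\<And>a. (\<And>i. i \<in> idx a \<Longrightarrow> P (sub a i)) \<Longrightarrow> P a"
  shows "P a"
proof (induction a)
  case Zero then show ?case using assms[of Zero] by simp
next
  case (S I f) then show ?case using assms[of "S I f"] by simp
qed

lemma trans_all: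
  "(le2 a b \<longrightarrow> le2 b c \<longrightarrow> le2 a c) \<and> (lt2 a b \<longrightarrow> le2 b c \<longrightarrow> lt2 a c)
   \<and> (le2 a b \<longrightarrow> lt2 b c \<longrightarrow> lt2 a c)"
proof (induction a arbitrary: b c rule: sub_induct)
  case (1 a)
  have A: "le2 a b \<longrightarrow> le2 b c \<longrightarrow> le2 a c" for b c
  proof (intro impI)
    assume h: "le2 a b" "le2 b c"
    show "le2 a c" unfolding le2_iff[of a c]
    proof
      fix i assume i: "i \<in> idx a"
      then have "lt2 (sub a i) b" using h(1) le2_iff[of a b] by blast
      then show "lt2 (sub a i) c" using 1[OF i, of b c] h(2) by blast
    qed
  qed
  show ?case
  proof (induction b arbitrary: c rule: sub_induct)
    case (1 b)
    have B: "lt2 a b \<longrightarrow> le2 b c \<longrightarrow> lt2 a c" for c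
    proof (intro impI)
      assume h: "lt2 a b" "le2 b c"
      then obtain k where k: "k \<in> idx b" "le2 a (sub b k)" using lt2_iff[of a b] by blast
      then have "lt2 (sub b k) c" using h(2) le2_iff[of b c] by blast
      then show "lt2 a c" using 1[OF k(1), of c] k(2) by blast
    qed
    show ?case
    proof (induction c rule: sub_induct)
      case (1 c)
      have "le2 a b \<longrightarrow> lt2 b c \<longrightarrow> lt2 a c"
      proof (intro impI)
        assume h: "le2 a b" "lt2 b c"
        then obtain m where m: "m \<in> idx c" "le2 b (sub c m)" using lt2_iff[of b c] by blast
        then have "le2 a (sub c m)" using A h(1) by blast
        then show "lt2 a c" using m(1) lt2_iff[of a c] by blast
      qed
      then show ?case using A B by blast
    qed
  qed
qed

lemma le2_trans: "le2 a b \<Longrightarrow> le2 b c \<Longrightarrow> le2 a c" using trans_all by blast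
lemma lt2_le2_trans: "lt2 a b \<Longrightarrow> le2 b c \<Longrightarrow> lt2 a c" using trans_all by blast
lemma le2_lt2_trans: "le2 a b \<Longrightarrow> lt2 b c \<Longrightarrow> lt2 a c" using trans_all by blast

lemma le2_refl: "le2 a a"
proof (induction a)
  case Zero then show ?case by (simp add: le2_iff)
next
  case (S I f) then show ?case by (auto simp: le2_iff[of "S I f"] lt2_iff)
qed

lemma lt2_sub: "i \<in> idx a \<Longrightarrow> lt2 (sub a i) a"
  using le2_refl lt2_iff by blast

lemma lt2_le2: "lt2 a b \<Longrightarrow> le2 a b"
proof (induction a arbitrary: b)
  case Zero then show ?case by (simp add: le2_iff)
next
  case (S I f)
  then obtain k where k: "k \<in> idx b" "le2 (S I f) (sub b k)" by (auto simp: lt2_iff)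
  show ?case unfolding le2_iff
  proof
    fix i assume i: "i \<in> idx (S I f)"
    then have "lt2 (f i) (sub b k)" using k by (simp add: le2_iff)
    then have "le2 (f i) (sub b k)" using S.IH i by simp
    then show "lt2 (sub (S I f) i) b" using le2_lt2_trans lt2_sub[OF k(1)] by simp
  qed
qed

lemma total2: "le2 a b \<or> lt2 b a"
proof (induction a arbitrary: b)
  case Zero then show ?case by (simp add: le2_iff)
next
  case (S I f)
  show ?case
  proof (rule ccontr)
    assume "\<not> (le2 (S I f) b \<or> lt2 b (S I f))"
    then obtain i where i: "i \<in> I" "\<not> lt2 (f i) b" and nl: "\<not> lt2 b (S I f)"
      by (auto simp: le2_iff[of "S I f"])
    have "\<forall>j\<in>idx b. lt2 (sub b j) (f i)"
      using S.IH[of "f i"] i by (auto simp: lt2_iff[of "f i" b]) 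
    then have "le2 b (f i)" by (simp add: le2_iff)
    then show False using nl i by (auto simp: lt2_iff[of b "S I f"])
  qed
qed



lemma max2: "bs \<noteq> [] \<Longrightarrow> \<exists>m\<in>set bs. \<forall>b\<in>set bs. le2 b m"
proof (induction bs)
  case Nil then show ?case by simp
next
  case (Cons x bs)
  show ?case
  proof (cases "bs = []")
    case True then show ?thesis using le2_refl by auto
  next
    case False
    then obtain m where m: "m \<in> set bs" "\<forall>b\<in>set bs. le2 b m" using Cons.IH by auto
    show ?thesis
    proof (cases "le2 x m")
      case True then show ?thesis using m by auto
    next
      case False
      then have "le2 m x" using total2 lt2_le2 by blast
      then have "\<forall>b\<in>set (x # bs). le2 b x" using m le2_refl le2_trans by (metis set_ConsD)
      then show ?thesis by auto
    qed
  qed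
qed

lemma set_concat_map2:
  "y \<in> set (concat (map2 (\<lambda>F b. map (sub b) F) Fs bs)) \<Longrightarrow>
   \<exists>j<length Fs. j < length bs \<and> (\<exists>i\<in>set (Fs ! j). y = sub (bs ! j) i)"
  by (auto simp: set_zip)

lemma ord_to2_aux:
  fixes a a' :: "'i ordt"
  shows "(ord_le a bs \<longrightarrow> (\<exists>b\<in>set bs. le2 a b)) \<and> (ord_lt a' bs' \<longrightarrow> (\<exists>b\<in>set bs'. lt2 a' b))"
proof (rule ord_le_ord_lt.induct[where ?P1.0 = "\<lambda>a bs. \<exists>b\<in>set bs. le2 a b" and ?P2.0 = "\<lambda>a bs. \<exists>b\<in>set bs. lt2 a b"])
  fix bs and a :: "'i ordt"
  assume le: "bs \<noteq> []" "\<forall>i\<in>idx a. ord_lt (sub a i) bs \<and> (\<exists>b\<in>set bs. lt2 (sub a i) b)"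
  then obtain m where m: "m \<in> set bs" "\<forall>b\<in>set bs. le2 b m" using max2 by blast
  have "\<forall>i\<in>idx a. lt2 (sub a i) m" using le m lt2_le2_trans by blast
  then show "\<exists>b\<in>set bs. le2 a b" using m le2_iff[of a m] by blast
next
  fix bs Fs and a :: "'i ordt"
  assume lt: "bs \<noteq> []" "length Fs = length bs"
     "\<forall>j<length bs. set (Fs ! j) \<subseteq> idx (bs ! j)"
     "\<exists>b\<in>set (concat (map2 (\<lambda>F b. map (sub b) F) Fs bs)). le2 a b"
  then obtain y where y: "y \<in> set (concat (map2 (\<lambda>F b. map (sub b) F) Fs bs))" "le2 a y" by blast
  then obtain j i where "j < length bs" "i \<in> set (Fs ! j)" "y = sub (bs ! j) i"
    using set_concat_map2 by blast
  then have "lt2 a (bs ! j)" using lt(3) y(2) lt2_iff[of a "bs ! j"] by blast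
  then show "\<exists>b\<in>set bs. lt2 a b" using \<open>j < length bs\<close> by auto
qed

lemma ord_to2:
  shows "ord_le a bs \<Longrightarrow> (\<exists>b\<in>set bs. le2 a b)"
    and "ord_lt a bs \<Longrightarrow> (\<exists>b\<in>set bs. lt2 a b)"
  using ord_to2_aux by blast+

lemma concat_single:
  "concat (map (\<lambda>j'. if j' = j then xs else []) [a..<b]) = (if a \<le> j \<and> j < b then xs else [])"
  by (induction b) auto

lemma lt_from_le:
  assumes le: "\<And>b. ord_le a [b] \<Longrightarrow> True" and j: "j < length bs" and k: "k \<in> idx (bs ! j)"
    and h: "ord_le a [sub (bs ! j) k]"
  shows "ord_lt a bs"
proof -
  define Fs where "Fs = map (\<lambda>j'. if j' = j then [k] else []) [0..<length bs]"
  have "map2 (\<lambda>F b. map (sub b) F) Fs bs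
        = map (\<lambda>j'. if j' = j then [sub (bs ! j) k] else []) [0..<length bs]"
    by (rule nth_equalityI) (auto simp: Fs_def)
  then have c: "concat (map2 (\<lambda>F b. map (sub b) F) Fs bs) = [sub (bs ! j) k]"
    using j by (simp add: concat_single)
  show ?thesis
  proof (rule ord_le_ord_lt.lt[where Fs = Fs])
    show "bs \<noteq> []" using j by auto
    show "length Fs = length bs" by (simp add: Fs_def)
    show "\<forall>j<length bs. set (Fs ! j) \<subseteq> idx (bs ! j)" using k by (auto simp: Fs_def)
    show "\<exists>j<length bs. Fs ! j \<noteq> []" using j by (auto simp: Fs_def)
    show "ord_le a (concat (map2 (\<lambda>F b. map (sub b) F) Fs bs))" using c h by simp
  qed
qed

lemma from2:
  "((\<exists>b\<in>set bs. le2 a b) \<longrightarrow> ord_le a bs) \<and> ((\<exists>b\<in>set bs'. lt2 a b) \<longrightarrow> ord_lt a bs')"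
proof (induction a arbitrary: bs bs' rule: sub_induct)
  case (1 a)
  have L: "ord_le a bs" if h: "\<exists>b\<in>set bs. le2 a b" for bs
  proof (rule ord_le_ord_lt.le)
    show "bs \<noteq> []" using h by auto
    show "\<forall>i\<in>idx a. ord_lt (sub a i) bs"
    proof
      fix i assume i: "i \<in> idx a"
      from h obtain b where b: "b \<in> set bs" "le2 a b" by blast
      then have "lt2 (sub a i) b" using i le2_iff[of a b] by blast
      then show "ord_lt (sub a i) bs" using 1[OF i, of bs bs] b(1) by blast
    qed
  qed
  have M: "ord_lt a bs'" if h: "\<exists>b\<in>set bs'. lt2 a b" for bs'
  proof -
    obtain j where j: "j < length bs'" "lt2 a (bs' ! j)" using h by (metis in_set_conv_nth)
    then obtain k where k: "k \<in> idx (bs' ! j)" "le2 a (sub (bs' ! j) k)" using lt2_iff[of a "bs' ! j"] by blast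
    have "ord_le a [sub (bs' ! j) k]" using L[of "[sub (bs' ! j) k]"] k(2) by simp
    then show ?thesis using lt_from_le[OF _ j(1) k(1)] by blast
  qed
  show ?case using L M by blast
qed

lemma le_single: "ord_le a [b] \<longleftrightarrow> le2 a b"
proof -
  have 1: "ord_le a [b] \<Longrightarrow> le2 a b" using ord_to2(1)[of a "[b]"] by simp
  have 2: "le2 a b \<Longrightarrow> ord_le a [b]" using from2[of "[b]" a "[b]"] by simp
  show ?thesis using 1 2 by blast
qed

lemma lt_single: "ord_lt a [b] \<longleftrightarrow> lt2 a b"
proof -
  have 1: "ord_lt a [b] \<Longrightarrow> lt2 a b" using ord_to2(2)[of a "[b]"] by simp
  have 2: "lt2 a b \<Longrightarrow> ord_lt a [b]" using from2[of "[b]" a "[b]"] by simp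
  show ?thesis using 1 2 by blast
qed


lemma succ_props:
  fixes FF :: "'i set set"
  assumes FF: "index_family FF"
  shows "succ_ord FF b = S (SOME I. I \<in> FF \<and> I \<approx> {..<Suc 0}) (\<lambda>_. b)"
    and "(SOME I. I \<in> FF \<and> I \<approx> {..<Suc 0}) \<in> FF"
    and "(SOME I. I \<in> FF \<and> I \<approx> {..<Suc 0}) \<noteq> {}"
proof -
  have c: "\<forall>k::nat. \<exists>I\<in>FF. I \<approx> {..<k}"
    using FF[unfolded index_family_def] by (rule conjunct1[OF conjunct2])
  have "\<exists>I. I \<in> FF \<and> I \<approx> {..<Suc 0}" using c[rule_format, of "Suc 0"] by blast
  then have h: "(SOME I. I \<in> FF \<and> I \<approx> {..<Suc 0}) \<in> FF \<and> (SOME I. I \<in> FF \<and> I \<approx> {..<Suc 0}) \<approx> {..<Suc 0}"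
    by (rule someI_ex)
  show "succ_ord FF b = S (SOME I. I \<in> FF \<and> I \<approx> {..<Suc 0}) (\<lambda>_. b)" by (simp add: succ_ord_def)
  show "(SOME I. I \<in> FF \<and> I \<approx> {..<Suc 0}) \<in> FF" using h by blast
  show "(SOME I. I \<in> FF \<and> I \<approx> {..<Suc 0}) \<noteq> {}"
  proof
    assume "(SOME I. I \<in> FF \<and> I \<approx> {..<Suc 0}) = {}"
    then have "({} :: 'i set) \<approx> {..<Suc 0}" using h by simp
    then have "{..<Suc 0} \<approx> ({} :: 'i set)" by (rule eqpoll_sym)
    then have "{..<Suc 0} = ({} :: nat set)" by simp
    moreover have "(0::nat) \<in> {..<Suc 0}" by simp
    ultimately show False by blast
  qed
qed

lemma succ_le2:
  assumes FF: "index_family FF"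
  shows "le2 (succ_ord FF b) c \<longleftrightarrow> lt2 b c"
proof -
  let ?I = "SOME I. I \<in> FF \<and> I \<approx> {..<Suc 0}"
  have "le2 (S ?I (\<lambda>_. b)) c \<longleftrightarrow> (\<forall>i\<in>?I. lt2 b c)" by (simp add: le2_iff[of "S ?I (\<lambda>_. b)"])
  then show ?thesis using succ_props(1)[OF FF, of b] succ_props(3)[OF FF] by auto
qed

lemma succ_ord_in: "index_family FF \<Longrightarrow> in_ord FF b \<Longrightarrow> in_ord FF (succ_ord FF b)"
  using succ_props(1)[of FF b] succ_props(2)[of FF] by (auto intro: in_ord.intros)

lemma in_ord_sub: "in_ord FF a \<Longrightarrow> i \<in> idx a \<Longrightarrow> in_ord FF (sub a i)"
  by (cases rule: in_ord.cases) auto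

theorem corollary3p20:
  fixes FF :: "'i set set" and \<alpha> :: "'i ordt"
  assumes "index_family FF"
    and "in_ord FF \<alpha>"
    and "\<not> ord_eq \<alpha> Zero"
  shows "(\<exists>\<beta>. in_ord FF \<beta> \<and> ord_eq \<alpha> (succ_ord FF \<beta>))
       \<or> ((\<forall>\<gamma>. in_ord FF \<gamma> \<and> ord_lt \<gamma> [\<alpha>] \<longrightarrow> ord_le \<gamma> [\<alpha>])
          \<and> (\<forall>\<delta>. in_ord FF \<delta> \<longrightarrow>
                (\<forall>\<gamma>. in_ord FF \<gamma> \<and> ord_lt \<gamma> [\<alpha>] \<longrightarrow> ord_le \<gamma> [\<delta>])
                \<longrightarrow> ord_le \<alpha> [\<delta>]))"
proof (cases "\<exists>i\<in>idx \<alpha>. le2 \<alpha> (succ_ord FF (sub \<alpha> i))")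
  case True
  then obtain i where i: "i \<in> idx \<alpha>" "le2 \<alpha> (succ_ord FF (sub \<alpha> i))" by blast
  have "le2 (succ_ord FF (sub \<alpha> i)) \<alpha>"
    using succ_le2[OF assms(1)] lt2_sub[OF i(1)] by blast
  then have "ord_eq \<alpha> (succ_ord FF (sub \<alpha> i))" using i by (simp add: ord_eq_def le_single)
  moreover have "in_ord FF (sub \<alpha> i)" using in_ord_sub[OF assms(2) i(1)] .
  ultimately show ?thesis by blast
next
  case False
  then have L: "lt2 (succ_ord FF (sub \<alpha> i)) \<alpha>" if "i \<in> idx \<alpha>" for i
    using total2 that by blast
  have P1: "\<forall>\<gamma>. in_ord FF \<gamma> \<and> ord_lt \<gamma> [\<alpha>] \<longrightarrow> ord_le \<gamma> [\<alpha>]"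
    by (simp add: le_single lt_single lt2_le2)
  have P2: "ord_le \<alpha> [\<delta>]" if d: "in_ord FF \<delta>"
     and H: "\<forall>\<gamma>. in_ord FF \<gamma> \<and> ord_lt \<gamma> [\<alpha>] \<longrightarrow> ord_le \<gamma> [\<delta>]" for \<delta>
  proof -
    have "lt2 (sub \<alpha> i) \<delta>" if i: "i \<in> idx \<alpha>" for i
    proof -
      have "in_ord FF (succ_ord FF (sub \<alpha> i))"
        using succ_ord_in[OF assms(1) in_ord_sub[OF assms(2) i]] .
      then have "le2 (succ_ord FF (sub \<alpha> i)) \<delta>" using H L[OF i] by (simp add: le_single lt_single)
      then show ?thesis using succ_le2[OF assms(1)] by blast
    qed
    then show ?thesis by (simp add: le_single le2_iff[of \<alpha> \<delta>])
  qed
  show ?thesis using P1 P2 by blast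
qed

end
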